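(* Let $(X,d)$ and $(Y,\rho)$ be compact metric spaces, let $F=\{f_1,\dots,f_k\}$ be a multiple mapping on $X$ and $G=\{g_1,\dots,g_m\}$ a multiple mapping on $Y$, and let $T:X\to Y$ be a topological conjugacy from $(X,F)$ to $(Y,G)$. Then $F$ is Hausdorff metric sensitive (with respect to $d_H$) if and only if $G$ is Hausdorff metric sensitive (with respect to $\rho_H$).
   Context: A multiple mapping $F=\{f_1,\dots,f_k\}$ on $X$ is a finite tuple of continuous self-maps of $X$; for $x\in X$ and $n\ge1$, $F(x)=\{f_1(x),\dots,f_k(x)\}$ and $F^n(x)=\{f_{i_1}f_{i_2}\cdots f_{i_n}(x)\mid i_1,\dots,i_n\in\{1,\dots,k\}\}$; for $A\subset X$, $F(A)=\bigcup_{a\in A}F(a)$. $d_H$ (resp. $\rho_H$) denotes the Hausdorff metric $d_H(A,B)=\max\{\sup_{a\in A}\inf_{b\in B}d(a,b),\sup_{b\in B}\inf_{a\in A}d(a,b)\}$ on nonempty compact subsets. $F$ is Hausdorff metric sensitive if there is $\delta>0$ such that for every nonempty open $U\subset X$ there exist $x,y\in U$ and $n\in\mathbb{Z}^+=\{1,2,\dots\}$ with $d_H(F^n(x),F^n(y))>\delta$. A topological conjugacy from $(X,F)$ to $(Y,G)$ is a homeomorphism $T:X\to Y$ such that $T(F(x))=G(T(x))$ for all $x\in X$. *)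

theory Defs
  imports "HOL-Analysis.Analysis"
begin

text \<open>A multiple mapping F = {f_1,...,f_k} is represented by the list fs = [f_1,...,f_k].\<close>

definition multiple_mapping :: "'a::metric_space set \<Rightarrow> ('a \<Rightarrow> 'a) list \<Rightarrow> bool" where
  "multiple_mapping X fs \<longleftrightarrow> fs \<noteq> [] \<and>
     (\<forall>f\<in>set fs. continuous_on X f \<and> f ` X \<subseteq> X)"

definition mm_app :: "('a \<Rightarrow> 'a) list \<Rightarrow> 'a \<Rightarrow> 'a set" where
  "mm_app fs x = (\<lambda>f. f x) ` set fs"

fun mm_iter :: "('a \<Rightarrow> 'a) list \<Rightarrow> nat \<Rightarrow> 'a \<Rightarrow> 'a set" where
  "mm_iter fs 0 x = {x}"
| "mm_iter fs (Suc n) x = (\<Union>f\<in>set fs. f ` mm_iter fs n x)"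

definition hausdorff_dist :: "'a::metric_space set \<Rightarrow> 'a set \<Rightarrow> real" where
  "hausdorff_dist A B = max (SUP a\<in>A. infdist a B) (SUP b\<in>B. infdist b A)"

definition hm_sensitive :: "'a::metric_space set \<Rightarrow> ('a \<Rightarrow> 'a) list \<Rightarrow> bool" where
  "hm_sensitive X fs \<longleftrightarrow> (\<exists>\<delta>>0. \<forall>U. openin (top_of_set X) U \<and> U \<noteq> {} \<longrightarrow>
     (\<exists>x\<in>U. \<exists>y\<in>U. \<exists>n\<ge>1. hausdorff_dist (mm_iter fs n x) (mm_iter fs n y) > \<delta>))"

definition mm_conjugacy ::
  "'a::metric_space set \<Rightarrow> ('a \<Rightarrow> 'a) list \<Rightarrow> 'b::metric_space set \<Rightarrow> ('b \<Rightarrow> 'b) list \<Rightarrow> ('a \<Rightarrow> 'b) \<Rightarrow> bool" where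
  "mm_conjugacy X fs Y gs T \<longleftrightarrow> (\<exists>T'. homeomorphism X Y T T') \<and>
     (\<forall>x\<in>X. T ` mm_app fs x = mm_app gs (T x))"

end

theory Submission
  imports Defs
begin

lemma infdist_gt_finite:
  fixes a :: "'a::metric_space"
  assumes "finite B" "B \<noteq> {}"
  shows "infdist a B > d \<longleftrightarrow> (\<forall>b\<in>B. dist a b > d)"
  using assms by (simp add: infdist_def finite_less_Inf_iff)

lemma hd_gt:
  fixes A B :: "'a::metric_space set"
  assumes "finite A" "A \<noteq> {}" "finite B" "B \<noteq> {}"
  shows "hausdorff_dist A B > d \<longleftrightarrow>
    (\<exists>a\<in>A. \<forall>b\<in>B. dist a b > d) \<or> (\<exists>b\<in>B. \<forall>a\<in>A. dist b a > d)"
proof -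
  have 1: "(SUP a\<in>A. infdist a B) > d \<longleftrightarrow> (\<exists>a\<in>A. infdist a B > d)"
    using assms by (intro less_cSUP_iff) (auto intro: bdd_above_finite)
  have 2: "(SUP b\<in>B. infdist b A) > d \<longleftrightarrow> (\<exists>b\<in>B. infdist b A > d)"
    using assms by (intro less_cSUP_iff) (auto intro: bdd_above_finite)
  show ?thesis unfolding hausdorff_dist_def less_max_iff_disj 1 2
    using infdist_gt_finite[OF assms(1,2)] infdist_gt_finite[OF assms(3,4)] by auto
qed

lemma mm_iter_finite: "finite (mm_iter fs n x)"
  by (induction n) auto

lemma mm_iter_ne: "fs \<noteq> [] \<Longrightarrow> mm_iter fs n x \<noteq> {}"
  by (induction n) (auto simp: neq_Nil_conv)

lemma mm_iter_sub:
  assumes "multiple_mapping X fs" "x \<in> X"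
  shows "mm_iter fs n x \<subseteq> X"
  using assms by (induction n) (auto simp: multiple_mapping_def)

lemma mm_iter_conj:
  assumes "multiple_mapping X fs" "mm_conjugacy X fs Y gs T" "x \<in> X"
  shows "mm_iter gs n (T x) = T ` mm_iter fs n x"
proof (induction n)
  case 0 then show ?case by simp
next
  case (Suc n)
  have sub: "mm_iter fs n x \<subseteq> X" using mm_iter_sub assms by blast
  have "mm_iter gs (Suc n) (T x) = (\<Union>z\<in>mm_iter fs n x. mm_app gs (T z))"
    unfolding mm_app_def using Suc by auto
  also have "\<dots> = (\<Union>z\<in>mm_iter fs n x. T ` mm_app fs z)"
    using sub assms(2) unfolding mm_conjugacy_def by (intro SUP_cong) auto
  also have "\<dots> = T ` mm_iter fs (Suc n) x"
    unfolding mm_app_def by auto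
  finally show ?case .
qed

lemma conj_sym:
  assumes "multiple_mapping X fs" "mm_conjugacy X fs Y gs T" "homeomorphism X Y T T'"
  shows "mm_conjugacy Y gs X fs T'"
  unfolding mm_conjugacy_def
proof (intro conjI ballI)
  show "\<exists>S. homeomorphism Y X T' S" using assms(3) homeomorphism_symD by blast
  fix y assume y: "y \<in> Y"
  define x where "x = T' y"
  have x: "x \<in> X" "T x = y" using y assms(3) unfolding x_def homeomorphism_def by auto
  have "T ` mm_app fs x = mm_app gs y" using assms(2) x unfolding mm_conjugacy_def by auto
  hence "T' ` mm_app gs y = T' ` T ` mm_app fs x" by simp
  also have "\<dots> = mm_app fs x"
  proof -
    have "mm_app fs x \<subseteq> X" using assms(1) x unfolding multiple_mapping_def mm_app_def by auto
    moreover have "\<forall>z\<in>X. T' (T z) = z" using assms(3) unfolding homeomorphism_def by auto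
    ultimately show ?thesis unfolding image_comp by (simp add: subset_eq)
  qed
  finally show "T' ` mm_app gs y = mm_app fs (T' y)" by (simp add: x_def)
qed

lemma one_dir:
  fixes X :: "'a::metric_space set" and Y :: "'b::metric_space set"
  assumes "compact Y"
    and "multiple_mapping X fs" and "multiple_mapping Y gs"
    and conj: "mm_conjugacy X fs Y gs T"
    and sens: "hm_sensitive X fs"
  shows "hm_sensitive Y gs"
proof -
  obtain T' where h: "homeomorphism X Y T T'" using conj unfolding mm_conjugacy_def by blast
  obtain \<delta> where d: "\<delta> > 0" and S0: "\<forall>U. openin (top_of_set X) U \<and> U \<noteq> {} \<longrightarrow>
     (\<exists>x\<in>U. \<exists>y\<in>U. \<exists>n\<ge>1. hausdorff_dist (mm_iter fs n x) (mm_iter fs n y) > \<delta>)"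
    using sens unfolding hm_sensitive_def by (elim exE conjE) (rule that)
  have S: "\<exists>x\<in>U. \<exists>y\<in>U. \<exists>n\<ge>1. hausdorff_dist (mm_iter fs n x) (mm_iter fs n y) > \<delta>"
    if "openin (top_of_set X) U" "U \<noteq> {}" for U
    using S0 that by blast
  have uc: "uniformly_continuous_on Y T'"
    using compact_uniformly_continuous[OF homeomorphism_cont2[OF h] assms(1)] .
  obtain e where e: "e > 0" and E0: "\<forall>u\<in>Y. \<forall>v\<in>Y. dist v u < e \<longrightarrow> dist (T' v) (T' u) < \<delta>"
    using uc[unfolded uniformly_continuous_on_def, rule_format, OF d] by blast
  have E: "\<And>u v. u \<in> Y \<Longrightarrow> v \<in> Y \<Longrightarrow> dist v u < e \<Longrightarrow> dist (T' v) (T' u) < \<delta>"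
    using E0 by blast
  have key: "dist (T a) (T b) > e/2" if "a \<in> X" "b \<in> X" "dist a b > \<delta>" for a b
  proof (rule ccontr)
    assume "\<not> ?thesis"
    hence "dist (T a) (T b) < e" using e by simp
    moreover have "T a \<in> Y" "T b \<in> Y" "T' (T a) = a" "T' (T b) = b"
      using h that unfolding homeomorphism_def by auto
    ultimately have "dist a b < \<delta>" using E[of "T b" "T a"] by simp
    thus False using that by simp
  qed
  show ?thesis unfolding hm_sensitive_def
  proof (intro exI[of _ "e/2"] conjI allI impI)
    show "e/2 > 0" using e by simp
    fix U assume U: "openin (top_of_set Y) U \<and> U \<noteq> {}"
    define V where "V = T' ` U"
    have Vo: "openin (top_of_set X) V"
      using U homeomorphism_imp_open_map[OF homeomorphism_symD[OF h]] unfolding V_def by blast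
    have Vne: "V \<noteq> {}" using U unfolding V_def by simp
    obtain x y n where xy: "x \<in> V" "y \<in> V" "n \<ge> 1"
      and gt: "hausdorff_dist (mm_iter fs n x) (mm_iter fs n y) > \<delta>"
      using S[OF Vo Vne] by blast
    have UY: "U \<subseteq> Y" using U openin_imp_subset by blast
    have hT: "\<And>u. u \<in> Y \<Longrightarrow> T' u \<in> X \<and> T (T' u) = u"
      using h unfolding homeomorphism_def by auto
    have xX: "x \<in> X" "T x \<in> U" and yX: "y \<in> X" "T y \<in> U"
      using xy(1,2) hT UY unfolding V_def by auto
    have fin: "fs \<noteq> []" "gs \<noteq> []" using assms(2,3) unfolding multiple_mapping_def by auto
    have sx: "mm_iter fs n x \<subseteq> X" "mm_iter fs n y \<subseteq> X"
      using mm_iter_sub[OF assms(2)] xX yX by auto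
    have eqx: "mm_iter gs n (T x) = T ` mm_iter fs n x"
      and eqy: "mm_iter gs n (T y) = T ` mm_iter fs n y"
      using mm_iter_conj[OF assms(2) conj] xX yX by auto
    have H1: "hausdorff_dist (mm_iter fs n x) (mm_iter fs n y) > \<delta> \<longleftrightarrow> (\<exists>a\<in>mm_iter fs n x. \<forall>b\<in>mm_iter fs n y. dist a b > \<delta>) \<or>
        (\<exists>b\<in>mm_iter fs n y. \<forall>a\<in>mm_iter fs n x. dist b a > \<delta>)"
      by (rule hd_gt) (simp_all add: mm_iter_finite mm_iter_ne fin)
    have H2: "hausdorff_dist (mm_iter gs n (T x)) (mm_iter gs n (T y)) > e/2 \<longleftrightarrow> (\<exists>a\<in>mm_iter gs n (T x). \<forall>b\<in>mm_iter gs n (T y). dist a b > e/2) \<or>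
        (\<exists>b\<in>mm_iter gs n (T y). \<forall>a\<in>mm_iter gs n (T x). dist b a > e/2)"
      by (rule hd_gt) (simp_all add: mm_iter_finite mm_iter_ne fin)
    from gt have "(\<exists>a\<in>mm_iter fs n x. \<forall>b\<in>mm_iter fs n y. dist a b > \<delta>) \<or>
        (\<exists>b\<in>mm_iter fs n y. \<forall>a\<in>mm_iter fs n x. dist b a > \<delta>)"
      using H1 by blast
    hence "(\<exists>a\<in>mm_iter gs n (T x). \<forall>b\<in>mm_iter gs n (T y). dist a b > e/2) \<or>
        (\<exists>b\<in>mm_iter gs n (T y). \<forall>a\<in>mm_iter gs n (T x). dist b a > e/2)"
    proof (elim disjE bexE)
      fix a assume a: "a \<in> mm_iter fs n x" "\<forall>b\<in>mm_iter fs n y. dist a b > \<delta>"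
      have "\<forall>b'\<in>T ` mm_iter fs n y. dist (T a) b' > e/2"
        using a sx key by (simp add: subset_eq)
      thus ?thesis unfolding eqx eqy using a(1) by blast
    next
      fix b assume b: "b \<in> mm_iter fs n y" "\<forall>a\<in>mm_iter fs n x. dist b a > \<delta>"
      have "\<forall>a'\<in>T ` mm_iter fs n x. dist (T b) a' > e/2"
        using b sx key by (simp add: subset_eq)
      thus ?thesis unfolding eqx eqy using b(1) by blast
    qed
    hence "hausdorff_dist (mm_iter gs n (T x)) (mm_iter gs n (T y)) > e/2"
      using H2 by blast
    thus "\<exists>x\<in>U. \<exists>y\<in>U. \<exists>n\<ge>1. hausdorff_dist (mm_iter gs n x) (mm_iter gs n y) > e/2"
      using xX yX xy(3) by blast
  qed
qed

theorem theorem4p2: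
  fixes X :: "'a::metric_space set" and Y :: "'b::metric_space set"
    and fs :: "('a \<Rightarrow> 'a) list" and gs :: "('b \<Rightarrow> 'b) list" and T :: "'a \<Rightarrow> 'b"
  assumes "compact X" and "compact Y"
    and "multiple_mapping X fs" and "multiple_mapping Y gs"
    and "mm_conjugacy X fs Y gs T"
  shows "hm_sensitive X fs \<longleftrightarrow> hm_sensitive Y gs"
proof
  assume "hm_sensitive X fs"
  thus "hm_sensitive Y gs" using one_dir assms by blast
next
  assume s: "hm_sensitive Y gs"
  obtain T' where h: "homeomorphism X Y T T'" using assms(5) unfolding mm_conjugacy_def by blast
  have "mm_conjugacy Y gs X fs T'" using conj_sym[OF assms(3,5) h] .
  thus "hm_sensitive X fs" using one_dir[OF assms(1) assms(4) assms(3) _ s] by blast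
qed

end
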